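(* Let $q=p^n$ be a prime power with $q\equiv 5\pmod 8$, let $\chi$ be a generator of the cyclic group $\widehat{\mathbb{F}_q^{\times}}$ of multiplicative characters of $\mathbb{F}_q$, and let $1\le r\le q-2$ be an integer. Let $a_1,\dots,a_{(q-1)/4}$ be the distinct elements of $D_4=\{x^4:x\in\mathbb{F}_q^{\times}\}$ (in any fixed order) and let $$B_{q,4}(\chi^r):=\left[\chi^r(a_i+a_j)+\chi^r(a_i-a_j)\right]_{1\le i,j\le (q-1)/4}.$$ Then $$\det(B_{q,4}(\chi^r))=(-1)^r\left(\frac{q}{2}\right)^{\frac{q-1}{4}}\prod_{k=0}^{(q-5)/4}\ {}_{2}F_{1}\left(\begin{array}{cc}\chi^{-r} & \chi^{4k}\\ & \chi^{4k+r}\end{array}\Bigg|\,-1\right)_q.$$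
   Context: Every multiplicative character $\psi$ of $\mathbb{F}_q$ is extended to $\mathbb{F}_q$ by $\psi(0)=0$ (including the trivial character). For characters $A,B$, the Jacobi sum is $J_q(A,B)=\sum_{x\in\mathbb{F}_q}A(x)B(1-x)$, and Greene's binomial coefficient is $\binom{A}{B}:=\frac{B(-1)}{q}J_q(A,\bar B)$, where $\bar B=B^{-1}$. For characters $A_0,A_1,B_1$ and $x\in\mathbb{F}_q$, Greene's Gaussian hypergeometric function is $${}_{2}F_{1}\left(\begin{array}{cc}A_0 & A_1\\ & B_1\end{array}\Bigg|\,x\right)_q:=\frac{q}{q-1}\sum_{\psi\in\widehat{\mathbb{F}_q^{\times}}}\binom{A_0\psi}{\psi}\binom{A_1\psi}{B_1\psi}\psi(x).$$ *)

theory Defs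
  imports Complex_Main "Jordan_Normal_Form.Determinant"
begin

text \<open>Multiplicative characters of a finite field 'a, extended by psi(0) = 0
  (also for the trivial character).\<close>
definition mult_chars :: "('a::{finite,field} \<Rightarrow> complex) set" where
  "mult_chars = {\<psi>. \<psi> 0 = 0 \<and> \<psi> 1 = 1 \<and> (\<forall>x y. \<psi> (x * y) = \<psi> x * \<psi> y)}"

definition char_pow :: "('a::{finite,field} \<Rightarrow> complex) \<Rightarrow> int \<Rightarrow> 'a \<Rightarrow> complex" where
  "char_pow \<chi> k = (\<lambda>x. if x = 0 then 0 else (\<chi> x) powi k)"

definition char_mult :: "('a \<Rightarrow> complex) \<Rightarrow> ('a \<Rightarrow> complex) \<Rightarrow> 'a \<Rightarrow> complex" where
  "char_mult A B = (\<lambda>x. A x * B x)"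

definition char_inv :: "('a \<Rightarrow> complex) \<Rightarrow> 'a \<Rightarrow> complex" where
  "char_inv B = (\<lambda>x. inverse (B x))"

definition is_char_generator :: "('a::{finite,field} \<Rightarrow> complex) \<Rightarrow> bool" where
  "is_char_generator \<chi> \<longleftrightarrow> \<chi> \<in> mult_chars \<and> (\<forall>\<psi>\<in>mult_chars. \<exists>k::int. \<psi> = char_pow \<chi> k)"

definition jacobi_sum :: "('a::{finite,field} \<Rightarrow> complex) \<Rightarrow> ('a \<Rightarrow> complex) \<Rightarrow> complex" where
  "jacobi_sum A B = (\<Sum>x\<in>(UNIV::'a set). A x * B (1 - x))"

definition greene_binom :: "('a::{finite,field} \<Rightarrow> complex) \<Rightarrow> ('a \<Rightarrow> complex) \<Rightarrow> complex" where
  "greene_binom A B = B (-1) / of_nat (card (UNIV::'a set)) * jacobi_sum A (char_inv B)"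

definition greene_2F1 :: "('a::{finite,field} \<Rightarrow> complex) \<Rightarrow> ('a \<Rightarrow> complex) \<Rightarrow> ('a \<Rightarrow> complex) \<Rightarrow> 'a \<Rightarrow> complex" where
  "greene_2F1 A0 A1 B1 x =
     of_nat (card (UNIV::'a set)) / (of_nat (card (UNIV::'a set)) - 1) *
     (\<Sum>\<psi>\<in>mult_chars. greene_binom (char_mult A0 \<psi>) \<psi> *
         greene_binom (char_mult A1 \<psi>) (char_mult B1 \<psi>) * \<psi> x)"

definition fourth_powers :: "'a::{finite,field} set" where
  "fourth_powers = {y. \<exists>x. x \<noteq> 0 \<and> y = x ^ 4}"

definition B_mat :: "('a::{finite,field} \<Rightarrow> complex) \<Rightarrow> 'a list \<Rightarrow> complex mat" where
  "B_mat \<psi> as = mat (length as) (length as)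
     (\<lambda>(i,j). \<psi> (as ! i + as ! j) + \<psi> (as ! i - as ! j))"

end

theory Submission
  imports Defs "HOL-Algebra.Algebraic_Closure_Type"
begin


lemma gen_exists:
  "\<exists>g::'a::{finite,field}. g \<noteq> 0 \<and> (\<forall>x. x \<noteq> 0 \<longrightarrow> (\<exists>i::nat. x = g ^ i))"
proof -
  let ?R = "ring_of_type_algebra :: 'a ring"
  have F: "field ?R" by (rule field_from_type_algebra)
  have fin: "finite (carrier ?R)" by (simp add: ring_of_type_algebra_def)
  have pw: "a[^]\<^bsub>?R\<^esub>i = a ^ i" for a and i::nat
    by (induction i) (simp_all add: ring_of_type_algebra_def)
  have cm: "carrier (Multiplicative_Group.mult_of ?R) = UNIV - {0}"
    by (simp add: ring_of_type_algebra_def Multiplicative_Group.mult_of_def)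
  obtain a where a1: "a \<in> carrier (Multiplicative_Group.mult_of ?R)" and
     a2: "carrier (Multiplicative_Group.mult_of ?R) = {a[^]\<^bsub>?R\<^esub>i | i::nat . i \<in> UNIV}"
    using field.finite_field_mult_group_has_gen[OF F fin] by blast
  have b1: "a \<noteq> 0" using a1 unfolding cm by simp
  have b2: "\<exists>i::nat. x = a ^ i" if "x \<noteq> 0" for x
  proof -
    have "x \<in> carrier (Multiplicative_Group.mult_of ?R)" using cm that by simp
    then have "x \<in> {a[^]\<^bsub>?R\<^esub>i | i::nat . i \<in> UNIV}" by (subst a2[symmetric])
    then show ?thesis by (auto simp: pw)
  qed
  show ?thesis using b1 b2 by blast
qed

lemma fermat_field:
  fixes x :: "'a::{finite,field}"
  assumes "x \<noteq> 0"
  shows "x ^ (card (UNIV::'a set) - 1) = 1"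
proof -
  let ?N = "UNIV - {0::'a}"
  have cN: "card ?N = card (UNIV::'a set) - 1" by (simp add: card_Diff_singleton)
  have "(\<Prod>y\<in>?N. x * y) = (\<Prod>y\<in>?N. y)"
    by (rule prod.reindex_bij_witness[where i="\<lambda>y. y / x" and j="\<lambda>y. x * y"])
       (use assms in auto)
  moreover have "(\<Prod>y\<in>?N. x * y) = x ^ card ?N * (\<Prod>y\<in>?N. y)"
    by (simp add: prod.distrib)
  moreover have "(\<Prod>y\<in>?N. y) \<noteq> 0" by simp
  ultimately show ?thesis using cN by simp
qed

lemma mc_0: "\<phi> \<in> mult_chars \<Longrightarrow> \<phi> 0 = 0" by (simp add: mult_chars_def)
lemma mc_1: "\<phi> \<in> mult_chars \<Longrightarrow> \<phi> 1 = 1" by (simp add: mult_chars_def)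
lemma mc_mult: "\<phi> \<in> mult_chars \<Longrightarrow> \<phi> (x * y) = \<phi> x * \<phi> y" by (simp add: mult_chars_def)

lemma mc_nz:
  assumes "\<phi> \<in> mult_chars" "(x::'a::{finite,field}) \<noteq> 0" shows "\<phi> x \<noteq> 0"
proof
  assume "\<phi> x = 0"
  have "\<phi> (x * inverse x) = \<phi> x * \<phi> (inverse x)" using assms mc_mult by blast
  then show False using assms \<open>\<phi> x = 0\<close> mc_1 by fastforce
qed

lemma mc_inv:
  assumes "\<phi> \<in> mult_chars" shows "\<phi> (inverse (x::'a::{finite,field})) = inverse (\<phi> x)"
proof (cases "x = 0")
  case True then show ?thesis using mc_0[OF assms] by simp
next
  case False
  have "\<phi> (x * inverse x) = \<phi> x * \<phi> (inverse x)" using assms mc_mult by blast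
  then have "\<phi> x * \<phi> (inverse x) = 1" using False mc_1[OF assms] by simp
  then show ?thesis by (metis inverse_unique)
qed

lemma mc_div:
  assumes "\<phi> \<in> mult_chars" shows "\<phi> ((x::'a::{finite,field}) / y) = \<phi> x / \<phi> y"
  by (simp add: divide_inverse mc_mult[OF assms] mc_inv[OF assms])

lemma mc_pow:
  assumes "\<phi> \<in> mult_chars" shows "\<phi> ((x::'a::{finite,field}) ^ k) = \<phi> x ^ k"
  by (induction k) (simp_all add: mc_1[OF assms] mc_mult[OF assms])

lemma mc_m1:
  assumes "\<phi> \<in> mult_chars" shows "\<phi> (-1::'a::{finite,field}) * \<phi> (-1) = 1"
  by (metis assms mc_1 mc_mult mult_minus1_right minus_minus)

lemma char_pow_nz: "x \<noteq> 0 \<Longrightarrow> char_pow \<chi> k x = \<chi> x powi k"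
  by (simp add: char_pow_def)

lemma char_pow_nat: "char_pow \<chi> (int k) x = (if x = 0 then 0 else \<chi> x ^ k)"
  by (simp add: char_pow_def)

lemma char_pow_neg: "char_pow \<chi> (- k) x = inverse (char_pow \<chi> k x)"
  by (simp add: char_pow_def power_int_minus)

lemma char_pow_add:
  assumes "\<chi> \<in> mult_chars"
  shows "char_pow \<chi> (a + b) (x::'a::{finite,field}) = char_pow \<chi> a x * char_pow \<chi> b x"
  using mc_nz[OF assms] by (simp add: char_pow_def power_int_add)

lemma char_pow_mem:
  assumes "\<chi> \<in> mult_chars"
  shows "char_pow \<chi> k \<in> (mult_chars :: ('a::{finite,field} \<Rightarrow> complex) set)"
  unfolding mult_chars_def
  using mc_1[OF assms] mc_mult[OF assms]
  by (auto simp: char_pow_def power_int_mult_distrib)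



lemma pow_mod_gen:
  fixes c :: "'b::comm_monoid_mult"
  assumes "c ^ n = 1" shows "c ^ a = c ^ (a mod n)"
proof -
  have "c ^ a = c ^ (n * (a div n) + a mod n)" by simp
  also have "\<dots> = (c ^ n) ^ (a div n) * c ^ (a mod n)" by (simp only: power_add power_mult)
  finally show ?thesis using assms by simp
qed

lemma cis_root:
  assumes "n > 0"
  shows "cis (2 * pi / real n) ^ a = 1 \<longleftrightarrow> n dvd a"
proof
  assume h: "cis (2 * pi / real n) ^ a = 1"
  then have "cis (real a * (2 * pi / real n)) = 1" by (simp add: DeMoivre)
  then have "Re (cis (real a * (2 * pi / real n))) = Re 1" by (rule arg_cong)
  then have "cos (real a * (2 * pi / real n)) = 1" by simp
  then obtain z :: int where z: "real a * (2 * pi / real n) = real_of_int z * 2 * pi"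
    by (auto simp: cos_one_2pi_int)
  then have "real a = real_of_int z * real n" using assms by (simp add: field_simps)
  then have "real_of_int (int a) = real_of_int (z * int n)" by simp
  then have "int a = z * int n" by (simp only: of_int_eq_iff)
  then have "int n dvd int a" by simp
  then show "n dvd a" by simp
next
  assume "n dvd a"
  then obtain k where "a = n * k" by blast
  have "cis (2 * pi / real n) ^ n = 1" using assms by (simp add: DeMoivre)
  then show "cis (2 * pi / real n) ^ a = 1" using \<open>a = n * k\<close> by (simp add: power_mult)
qed

locale gsetup =
  fixes g :: "'a::{finite,field}" and \<chi> :: "'a \<Rightarrow> complex" and n m :: nat
  assumes g0: "g \<noteq> 0" and gen: "\<And>x. x \<noteq> 0 \<Longrightarrow> \<exists>i. x = g ^ i"
    and chi: "is_char_generator \<chi>"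
    and n_def: "n = card (UNIV::'a set) - 1" and nm: "n = 4 * m" and m_odd: "odd m"
begin

lemma m_pos: "m > 0" using m_odd by (cases m) auto
lemma n_pos: "n > 0" using m_pos nm by simp

lemma g_n: "g ^ n = 1" using fermat_field[OF g0] n_def by simp

lemma gpow_mod: "g ^ i = g ^ (i mod n)" using pow_mod_gen[OF g_n] .

lemma nz_image: "UNIV - {0} = (\<lambda>i. g ^ i) ` {..<n}"
proof
  show "UNIV - {0} \<subseteq> (\<lambda>i. g ^ i) ` {..<n}"
  proof
    fix x assume "x \<in> UNIV - {0::'a}"
    then obtain i where "x = g ^ i" using gen by blast
    then have "x = g ^ (i mod n)" using gpow_mod by simp
    moreover have "i mod n < n" using n_pos by simp
    ultimately show "x \<in> (\<lambda>i. g ^ i) ` {..<n}" by blast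
  qed
  show "(\<lambda>i. g ^ i) ` {..<n} \<subseteq> UNIV - {0}" using g0 by auto
qed

lemma inj_g: "inj_on (\<lambda>i. g ^ i) {..<n}"
proof (rule eq_card_imp_inj_on)
  show "finite {..<n}" by simp
  have "card ((\<lambda>i. g ^ i) ` {..<n}) = card (UNIV - {0::'a})" using nz_image by simp
  also have "\<dots> = n" using n_def by (simp add: card_Diff_singleton)
  finally show "card ((\<lambda>i. g ^ i) ` {..<n}) = card {..<n}" by simp
qed

lemma gpow_eq: "g ^ a = g ^ b \<longleftrightarrow> a mod n = b mod n"
proof
  assume "g ^ a = g ^ b"
  then have "g ^ (a mod n) = g ^ (b mod n)" using gpow_mod by metis
  then show "a mod n = b mod n" using inj_g n_pos unfolding inj_on_def by simp
next
  assume "a mod n = b mod n" then show "g ^ a = g ^ b" using gpow_mod by metis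
qed

lemma gpow_one: "g ^ a = 1 \<longleftrightarrow> n dvd a"
  using gpow_eq[of a 0] by (simp add: mod_eq_0_iff_dvd)

lemma chi_mem: "\<chi> \<in> mult_chars" using chi by (simp add: is_char_generator_def)

lemma chi_n: "x \<noteq> 0 \<Longrightarrow> \<chi> x ^ n = 1"
  using fermat_field[of x] n_def mc_pow[OF chi_mem, of x n] mc_1[OF chi_mem] by simp

definition dl :: "'a \<Rightarrow> nat" where "dl x = (SOME i. x = g ^ i)"

lemma dl: "x \<noteq> 0 \<Longrightarrow> g ^ dl x = x"
proof -
  assume "x \<noteq> 0"
  from someI_ex[OF gen[OF this]] show ?thesis unfolding dl_def by simp
qed

lemma chi_inj:
  assumes z0: "z \<noteq> 0" and z1: "\<chi> z = 1"
  shows "z = 1"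
proof -
  define w where "w = cis (2 * pi / real n)"
  have wr: "w ^ a = 1 \<longleftrightarrow> n dvd a" for a unfolding w_def using cis_root n_pos by blast
  have wn: "w ^ n = 1" using wr by simp
  define \<theta> where "\<theta> x = (if x = 0 then 0 else w ^ dl x)" for x
  have wmod: "w ^ a = w ^ b" if "a mod n = b mod n" for a b
    using pow_mod_gen[OF wn] that by metis
  have th_mult: "\<theta> (x * y) = \<theta> x * \<theta> y" for x y
  proof (cases "x = 0 \<or> y = 0")
    case True then show ?thesis by (auto simp: \<theta>_def)
  next
    case False
    then have "g ^ dl (x * y) = g ^ (dl x + dl y)" using dl by (simp add: power_add)
    then have "dl (x * y) mod n = (dl x + dl y) mod n" using gpow_eq by blast
    then have "w ^ dl (x * y) = w ^ (dl x + dl y)" by (rule wmod)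
    then show ?thesis using False by (simp add: \<theta>_def power_add)
  qed
  have th1: "\<theta> 1 = 1"
  proof -
    have "g ^ dl 1 = g ^ 0" using dl by simp
    then have "dl 1 mod n = 0 mod n" using gpow_eq by blast
    then have "w ^ dl 1 = w ^ 0" by (rule wmod)
    then show ?thesis by (simp add: \<theta>_def)
  qed
  have "\<theta> \<in> mult_chars" unfolding mult_chars_def using th_mult th1 by (simp add: \<theta>_def)
  then obtain k where "\<theta> = char_pow \<chi> k" using chi unfolding is_char_generator_def by blast
  then have "\<theta> z = 1" using z0 z1 by (simp add: char_pow_def)
  then have "n dvd dl z" using z0 wr by (simp add: \<theta>_def)
  then have "g ^ dl z = 1" using gpow_one by blast
  then show ?thesis using dl[OF z0] by simp
qed

lemma omega_one: "\<chi> g ^ a = 1 \<longleftrightarrow> n dvd a"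
proof
  assume "\<chi> g ^ a = 1"
  then have "\<chi> (g ^ a) = 1" using mc_pow[OF chi_mem] by simp
  then have "g ^ a = 1" using chi_inj g0 by simp
  then show "n dvd a" using gpow_one by simp
next
  assume "n dvd a"
  then have "g ^ a = 1" using gpow_one by simp
  then show "\<chi> g ^ a = 1" using mc_pow[OF chi_mem, of g a] mc_1[OF chi_mem] by simp
qed

lemma neg1: "g ^ (2 * m) = -1"
proof -
  have "(g ^ (2 * m)) ^ 2 = 1" using g_n nm by (simp add: power_mult[symmetric] mult.commute)
  then have "(g ^ (2 * m) - 1) * (g ^ (2 * m) + 1) = 0" by (simp add: algebra_simps power2_eq_square)
  moreover have "g ^ (2 * m) \<noteq> 1"
  proof
    assume "g ^ (2 * m) = 1"
    then have "n dvd 2 * m" using gpow_one by blast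
    then show False using nm m_pos by (simp add: nat_dvd_not_less)
  qed
  ultimately show ?thesis by (simp add: eq_neg_iff_add_eq_0)
qed

lemma m1_ne_1: "(-1::'a) \<noteq> 1"
proof
  assume "(-1::'a) = 1"
  then have "g ^ (2 * m) = g ^ 0" using neg1 by simp
  then have "(2 * m) mod n = 0" using gpow_eq[of "2*m" 0] by simp
  then show False using nm m_pos by simp
qed

lemma two_nz: "(2::'a) \<noteq> 0"
  using m1_ne_1 by (metis add_eq_0_iff2 one_add_one)

lemma chi_m1: "\<chi> (-1) = -1"
proof -
  have "\<chi> (-1) * \<chi> (-1) = 1" using mc_m1[OF chi_mem] .
  then have "(\<chi> (-1) - 1) * (\<chi> (-1) + 1) = 0" by (simp add: algebra_simps)
  moreover have "\<chi> (-1) \<noteq> 1" using chi_inj m1_ne_1 by force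
  ultimately show ?thesis by (simp add: eq_neg_iff_add_eq_0)
qed

end


context gsetup begin

lemma powi_mod:
  assumes "x \<noteq> 0"
  shows "\<chi> x powi k = \<chi> x ^ nat (k mod int n)"
proof -
  have c0: "\<chi> x \<noteq> 0" using mc_nz[OF chi_mem assms] .
  have k: "int n * (k div int n) + k mod int n = k" by simp
  have "\<chi> x powi (int n * (k div int n) + k mod int n) = \<chi> x powi (int n * (k div int n)) * \<chi> x powi (k mod int n)"
    by (rule power_int_add) (simp add: c0)
  then have "\<chi> x powi k = \<chi> x powi (int n * (k div int n)) * \<chi> x powi (k mod int n)"
    by (simp only: k)
  also have "\<chi> x powi (int n * (k div int n)) = 1"
    by (simp add: power_int_mult chi_n[OF assms])
  also have "\<chi> x powi (k mod int n) = \<chi> x ^ nat (k mod int n)"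
    using n_pos by (metis Euclidean_Rings.pos_mod_sign of_nat_0_less_iff power_int_of_nat int_nat_eq)
  finally show ?thesis by simp
qed

lemma mc_eq: "mult_chars = (\<lambda>k. char_pow \<chi> (int k)) ` {..<n}"
proof
  show "(\<lambda>k. char_pow \<chi> (int k)) ` {..<n} \<subseteq> mult_chars" using char_pow_mem[OF chi_mem] by auto
  show "mult_chars \<subseteq> (\<lambda>k. char_pow \<chi> (int k)) ` {..<n}"
  proof
    fix \<phi> assume "\<phi> \<in> (mult_chars :: ('a \<Rightarrow> complex) set)"
    then obtain k where k: "\<phi> = char_pow \<chi> k" using chi unfolding is_char_generator_def by blast
    have "\<phi> = char_pow \<chi> (int (nat (k mod int n)))"
      unfolding k by (rule ext) (simp add: char_pow_def powi_mod)
    moreover have "nat (k mod int n) < n" using n_pos by (simp add: nat_less_iff)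
    ultimately show "\<phi> \<in> (\<lambda>k. char_pow \<chi> (int k)) ` {..<n}" by blast
  qed
qed

lemma omega_inj_aux:
  assumes "a \<le> b" "b < n" "\<chi> g ^ a = \<chi> g ^ b"
  shows "a = b"
proof -
  have c0: "\<chi> g \<noteq> 0" using mc_nz[OF chi_mem g0] .
  have "\<chi> g ^ a * \<chi> g ^ (b - a) = \<chi> g ^ (a + (b - a))" by (simp only: power_add)
  also have "\<dots> = \<chi> g ^ b" using assms(1) by simp
  also have "\<dots> = \<chi> g ^ a * 1" using assms(3) by simp
  finally have "\<chi> g ^ a * \<chi> g ^ (b - a) = \<chi> g ^ a * 1" .
  then have "\<chi> g ^ (b - a) = 1" using c0 by simp
  then have "n dvd b - a" using omega_one by blast
  moreover have "b - a < n" using assms by simp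
  ultimately have "b - a = 0" using dvd_imp_le by fastforce
  then show ?thesis using assms by simp
qed

lemma omega_inj:
  assumes "a < n" "b < n" "\<chi> g ^ a = \<chi> g ^ b"
  shows "a = b"
  using omega_inj_aux[of a b] omega_inj_aux[of b a] assms by (cases "a \<le> b") auto

lemma mc_inj: "inj_on (\<lambda>k. char_pow \<chi> (int k)) {..<n}"
proof (rule inj_onI)
  fix a b assume "a \<in> {..<n}" "b \<in> {..<n}" "char_pow \<chi> (int a) = char_pow \<chi> (int b)"
  then have "char_pow \<chi> (int a) g = char_pow \<chi> (int b) g" by simp
  then have "\<chi> g ^ a = \<chi> g ^ b" using g0 by (simp add: char_pow_def)
  then show "a = b" using omega_inj \<open>a \<in> {..<n}\<close> \<open>b \<in> {..<n}\<close> by simp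
qed

lemma mc_finite: "finite (mult_chars :: ('a \<Rightarrow> complex) set)"
  unfolding mc_eq by simp

lemma orth:
  assumes "z \<noteq> 0"
  shows "(\<Sum>\<phi>\<in>(mult_chars :: ('a \<Rightarrow> complex) set). \<phi> z) = (if z = 1 then of_nat n else 0)"
proof -
  have "(\<Sum>\<phi>\<in>(mult_chars :: ('a \<Rightarrow> complex) set). \<phi> z) = (\<Sum>k<n. char_pow \<chi> (int k) z)"
    unfolding mc_eq by (rule sum.reindex[OF mc_inj, unfolded comp_def])
  also have "\<dots> = (\<Sum>k<n. \<chi> z ^ k)" using assms by (simp add: char_pow_def)
  also have "\<dots> = (if z = 1 then of_nat n else 0)"
  proof (cases "z = 1")
    case True then show ?thesis by (simp add: mc_1[OF chi_mem])
  next
    case False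
    then have "\<chi> z \<noteq> 1" using chi_inj assms by blast
    then show ?thesis using False by (simp add: sum_gp_strict chi_n[OF assms])
  qed
  finally show ?thesis .
qed

end


context gsetup begin

lemma D4_eq: "fourth_powers = (\<lambda>s. g ^ (4 * s)) ` {..<m}"
proof
  show "fourth_powers \<subseteq> (\<lambda>s. g ^ (4 * s)) ` {..<m}"
  proof
    fix y assume "y \<in> (fourth_powers :: 'a set)"
    then obtain x where x0: "x \<noteq> 0" and y: "y = x ^ 4" unfolding fourth_powers_def by blast
    obtain i where "x = g ^ i" using gen[OF x0] by blast
    then have "y = g ^ (4 * i)" using y by (simp add: power_mult[symmetric] mult.commute)
    also have "\<dots> = g ^ ((4 * i) mod n)" using gpow_mod by blast
    also have "(4 * i) mod n = 4 * (i mod m)" using nm by (simp add: mod_mult_mult1)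
    finally have "y = g ^ (4 * (i mod m))" .
    moreover have "i mod m < m" using m_pos by simp
    ultimately show "y \<in> (\<lambda>s. g ^ (4 * s)) ` {..<m}" by blast
  qed
  show "(\<lambda>s. g ^ (4 * s)) ` {..<m} \<subseteq> fourth_powers"
  proof
    fix y assume "y \<in> (\<lambda>s. g ^ (4 * s)) ` {..<m}"
    then obtain s where "y = g ^ (4 * s)" by blast
    then have "y = (g ^ s) ^ 4" by (simp add: power_mult[symmetric] mult.commute)
    moreover have "g ^ s \<noteq> 0" using g0 by simp
    ultimately show "y \<in> fourth_powers" unfolding fourth_powers_def by blast
  qed
qed

lemma inj_D4: "inj_on (\<lambda>s. g ^ (4 * s)) {..<m}"
proof (rule inj_onI)
  fix a b assume a: "a \<in> {..<m}" and b: "b \<in> {..<m}" and e: "g ^ (4 * a) = g ^ (4 * b)"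
  then have "(4 * a) mod n = (4 * b) mod n" using gpow_eq by blast
  then have "4 * (a mod m) = 4 * (b mod m)" using nm by (simp add: mod_mult_mult1)
  then show "a = b" using a b by simp
qed

lemma card_D4: "card (fourth_powers :: 'a set) = m"
  unfolding D4_eq using card_image[OF inj_D4] by simp

lemma finite_D4: "finite (fourth_powers :: 'a set)" by simp

lemma D4_nz: "t \<in> fourth_powers \<Longrightarrow> t \<noteq> 0"
  unfolding fourth_powers_def by auto

lemma D4_mult_bij:
  assumes "a \<in> fourth_powers"
  shows "bij_betw (\<lambda>t. a * t) fourth_powers fourth_powers"
proof -
  obtain x where x0: "x \<noteq> 0" and ax: "a = x ^ 4" using assms unfolding fourth_powers_def by blast
  show ?thesis
  proof (rule bij_betw_byWitness[where f'="\<lambda>t. t / a"])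
    show "\<forall>t\<in>fourth_powers. a * t / a = t" using x0 ax by simp
    show "\<forall>t\<in>fourth_powers. a * (t / a) = t" using x0 ax by simp
    show "(\<lambda>t. a * t) ` fourth_powers \<subseteq> fourth_powers"
    proof
      fix z assume "z \<in> (\<lambda>t. a * t) ` fourth_powers"
      then obtain y where "y \<noteq> 0" "z = a * y ^ 4" unfolding fourth_powers_def by blast
      then have "z = (x * y) ^ 4" "x * y \<noteq> 0" using ax x0 by (simp_all add: power_mult_distrib)
      then show "z \<in> fourth_powers" unfolding fourth_powers_def by blast
    qed
    show "(\<lambda>t. t / a) ` fourth_powers \<subseteq> fourth_powers"
    proof
      fix z assume "z \<in> (\<lambda>t. t / a) ` fourth_powers"
      then obtain y where "y \<noteq> 0" "z = y ^ 4 / a" unfolding fourth_powers_def by blast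
      then have "z = (y / x) ^ 4" "y / x \<noteq> 0" using ax x0 by (simp_all add: power_divide)
      then show "z \<in> fourth_powers" unfolding fourth_powers_def by blast
    qed
  qed
qed

lemma chi_D4_2m: "t \<in> fourth_powers \<Longrightarrow> \<chi> t ^ (2 * m) = 1"
proof -
  assume "t \<in> fourth_powers"
  then obtain x where x0: "x \<noteq> 0" and tx: "t = x ^ 4" unfolding fourth_powers_def by blast
  have "\<chi> t ^ (2 * m) = (\<chi> x ^ n) ^ 2"
    using tx nm mc_pow[OF chi_mem] by (simp add: power_mult[symmetric] mult.commute mult.left_commute)
  then show ?thesis using chi_n[OF x0] by simp
qed

lemma sum_D4: "(\<Sum>t\<in>fourth_powers. f t) = (\<Sum>s<m. f (g ^ (4 * s)))"
  unfolding D4_eq by (rule sum.reindex[OF inj_D4, unfolded comp_def])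

lemma prod_D4: "(\<Prod>t\<in>fourth_powers. f t) = (\<Prod>s<m. f (g ^ (4 * s)))"
  unfolding D4_eq by (rule prod.reindex[OF inj_D4, unfolded comp_def])

lemma orthD4:
  assumes "0 < j" "j < 2 * m" "j \<noteq> m"
  shows "(\<Sum>t\<in>fourth_powers. \<chi> t ^ (2 * j)) = 0"
proof -
  define \<zeta> where "\<zeta> = \<chi> g ^ (8 * j)"
  have "(\<Sum>t\<in>fourth_powers. \<chi> t ^ (2 * j)) = (\<Sum>s<m. \<chi> (g ^ (4 * s)) ^ (2 * j))"
    by (rule sum_D4)
  also have "\<dots> = (\<Sum>s<m. \<zeta> ^ s)"
    unfolding \<zeta>_def using mc_pow[OF chi_mem]
    by (simp add: power_mult[symmetric] mult.commute mult.left_commute)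
  also have "\<dots> = 0"
  proof -
    have z1: "\<zeta> \<noteq> 1"
    proof
      assume "\<zeta> = 1"
      then have "n dvd 8 * j" unfolding \<zeta>_def using omega_one by blast
      then have "4 * m dvd 4 * (2 * j)" using nm by simp
      then have "m dvd 2 * j" by (simp only: mult_dvd_mono nat_mult_dvd_cancel_disj) simp
      moreover have "coprime m 2" using m_odd by simp
      ultimately have "m dvd j" by (simp add: coprime_dvd_mult_right_iff)
      then obtain c where "j = m * c" by blast
      show False
      proof (cases "c \<le> 1")
        case True
        then have "c = 0 \<or> c = 1" by auto
        then show False using assms \<open>j = m * c\<close> by auto
      next
        case False
        then have "m * 2 \<le> m * c" by simp
        then show False using assms \<open>j = m * c\<close> by simp
      qed
    qed
    have zm: "\<zeta> ^ m = 1"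
    proof -
      have "n dvd 8 * j * m" using nm by simp
      then show ?thesis unfolding \<zeta>_def using omega_one by (simp add: power_mult[symmetric])
    qed
    show ?thesis using z1 zm by (simp add: sum_gp_strict)
  qed
  finally show ?thesis .
qed

lemma sum_lessThan_twice0: "2 * (\<Sum>s<k. s) + k = k * (k :: nat)"
  by (induction k) (simp_all add: algebra_simps)

lemma sum_lessThan_twice: "2 * (\<Sum>s<k. s) = k * (k - 1 :: nat)"
  using sum_lessThan_twice0[of k] by (simp add: diff_mult_distrib2)

lemma prod_D4_one:
  "(\<Prod>t\<in>fourth_powers. \<chi> t ^ r) = 1"
proof -
  have "(\<Prod>t\<in>fourth_powers. \<chi> t ^ r) = (\<Prod>s<m. \<chi> (g ^ (4 * s)) ^ r)" by (rule prod_D4)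
  also have "\<dots> = (\<Prod>s<m. (\<chi> g ^ r) ^ (4 * s))"
    using mc_pow[OF chi_mem] by (simp add: power_mult[symmetric] mult.commute)
  also have "\<dots> = (\<chi> g ^ r) ^ (\<Sum>s<m. 4 * s)" by (simp add: power_sum)
  also have "(\<Sum>s<m. 4 * s) = 2 * (m * (m - 1))"
    using sum_lessThan_twice[of m] by (simp add: sum_distrib_left[symmetric])
  also have "\<dots> = n * ((m - 1) div 2)"
    using nm m_odd by (auto elim!: oddE)
  also have "(\<chi> g ^ r) ^ (n * ((m - 1) div 2)) = ((\<chi> g ^ n) ^ r) ^ ((m - 1) div 2)"
    by (simp add: power_mult[symmetric] ac_simps)
  also have "\<dots> = 1" by (simp add: chi_n[OF g0])
  finally show ?thesis .
qed

end


context gsetup begin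

lemma sum_sq:
  "(\<Sum>t\<in>UNIV - {0}. G (t ^ 2)) = 2 * (\<Sum>u\<in>(\<lambda>t. t ^ 2) ` (UNIV - {0::'a}). (G u :: complex))"
proof -
  have "(\<Sum>t\<in>UNIV - {0}. G (t ^ 2)) =
        (\<Sum>y\<in>(\<lambda>t. t ^ 2) ` (UNIV - {0::'a}). \<Sum>x\<in>{x. x \<in> UNIV - {0} \<and> x ^ 2 = y}. G (x ^ 2))"
    by (rule sum.image_gen) simp
  also have "\<dots> = (\<Sum>y\<in>(\<lambda>t. t ^ 2) ` (UNIV - {0::'a}). 2 * G y)"
  proof (rule sum.cong[OF refl])
    fix y assume "y \<in> (\<lambda>t. t ^ 2) ` (UNIV - {0::'a})"
    then obtain s where s0: "s \<noteq> 0" and ys: "y = s ^ 2" by blast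
    have fib: "{x. x \<in> UNIV - {0} \<and> x ^ 2 = y} = {s, -s}"
      using s0 ys by (auto simp: power2_eq_iff)
    have "s \<noteq> -s"
    proof
      assume "s = -s"
      then have "2 * s = 0" by (metis add_eq_0_iff2 mult_2)
      then show False using s0 two_nz by simp
    qed
    then show "(\<Sum>x\<in>{x. x \<in> UNIV - {0} \<and> x ^ 2 = y}. G (x ^ 2)) = 2 * G y"
      unfolding fib using ys by simp
  qed
  also have "\<dots> = 2 * (\<Sum>u\<in>(\<lambda>t. t ^ 2) ` (UNIV - {0::'a}). G u)"
    by (simp add: sum_distrib_left)
  finally show ?thesis .
qed

lemma S_split:
  "(\<lambda>t. t ^ 2) ` (UNIV - {0::'a}) = fourth_powers \<union> uminus ` fourth_powers"
proof
  show "(\<lambda>t. t ^ 2) ` (UNIV - {0::'a}) \<subseteq> fourth_powers \<union> uminus ` fourth_powers"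
  proof
    fix y assume "y \<in> (\<lambda>t. t ^ 2) ` (UNIV - {0::'a})"
    then obtain t where t0: "t \<noteq> 0" and yt: "y = t ^ 2" by blast
    obtain j where tj: "t = g ^ j" using gen[OF t0] by blast
    show "y \<in> fourth_powers \<union> uminus ` fourth_powers"
    proof (cases "even j")
      case True
      then obtain i where "j = 2 * i" by blast
      then have "y = (g ^ i) ^ 4" using yt tj by (simp add: power_mult[symmetric] mult.commute)
      moreover have "g ^ i \<noteq> 0" using g0 by simp
      ultimately show ?thesis unfolding fourth_powers_def by blast
    next
      case False
      then have "even (m + j)" using m_odd by simp
      then obtain i where i: "m + j = 2 * i" by blast
      have "-y = g ^ (2 * m) * g ^ (2 * j)" using neg1 yt tj by (simp add: power_mult[symmetric] mult.commute)
      also have "\<dots> = g ^ (2 * m + 2 * j)" by (simp add: power_add)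
      also have "2 * m + 2 * j = 4 * i" using i by simp
      also have "g ^ (4 * i) = (g ^ i) ^ 4" by (simp add: power_mult[symmetric] mult.commute)
      finally have "-y = (g ^ i) ^ 4" .
      moreover have "g ^ i \<noteq> 0" using g0 by simp
      ultimately have "-y \<in> fourth_powers" unfolding fourth_powers_def by blast
      then have "y \<in> uminus ` fourth_powers" by (metis image_eqI minus_minus)
      then show ?thesis by blast
    qed
  qed
  show "fourth_powers \<union> uminus ` fourth_powers \<subseteq> (\<lambda>t. t ^ 2) ` (UNIV - {0::'a})"
  proof
    fix y assume "y \<in> fourth_powers \<union> uminus ` (fourth_powers :: 'a set)"
    then obtain x where x0: "x \<noteq> 0" and yx: "y = x ^ 4 \<or> y = - (x ^ 4)"
      unfolding fourth_powers_def by blast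
    have "\<exists>z. z \<noteq> 0 \<and> y = z ^ 2"
    proof (cases "y = x ^ 4")
      case True
      then have "y = (x ^ 2) ^ 2" by (simp add: power_mult[symmetric])
      moreover have "x ^ 2 \<noteq> 0" using x0 by simp
      ultimately show ?thesis by (intro exI[of _ "x ^ 2"]) simp
    next
      case False
      then have "y = - (x ^ 4)" using yx by blast
      moreover have "(g ^ m * x ^ 2) ^ 2 = - (x ^ 4)"
      proof -
        have "(g ^ m * x ^ 2) ^ 2 = g ^ (2 * m) * x ^ 4"
          by (simp add: power_mult_distrib power_mult[symmetric] mult.commute)
        then show ?thesis using neg1 by simp
      qed
      ultimately have "y = (g ^ m * x ^ 2) ^ 2" by simp
      moreover have "g ^ m * x ^ 2 \<noteq> 0" using x0 g0 by simp
      ultimately show ?thesis by (intro exI[of _ "g ^ m * x ^ 2"]) simp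
    qed
    then obtain z where "z \<noteq> 0" "y = z ^ 2" by blast
    then show "y \<in> (\<lambda>t. t ^ 2) ` (UNIV - {0::'a})" by (intro image_eqI[of _ _ z]) simp_all
  qed
qed

lemma S_disj: "fourth_powers \<inter> uminus ` fourth_powers = ({} :: 'a set)"
proof (rule ccontr)
  assume "fourth_powers \<inter> uminus ` fourth_powers \<noteq> ({} :: 'a set)"
  then obtain x w :: 'a where x0: "x \<noteq> 0" and w0: "w \<noteq> 0" and e: "x ^ 4 = - (w ^ 4)"
    unfolding fourth_powers_def by blast
  have "(x / w) ^ 4 = -1" using e w0 by (simp add: power_divide)
  moreover have "x / w \<noteq> 0" using x0 w0 by simp
  ultimately obtain j where "(g ^ j) ^ 4 = -1" using gen by metis
  then have "g ^ (4 * j) = g ^ (2 * m)" using neg1 by (simp add: power_mult[symmetric] mult.commute)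
  then have "(4 * j) mod n = (2 * m) mod n" using gpow_eq by blast
  then have "4 * (j mod m) = 2 * m" using nm m_pos by (simp add: mod_mult_mult1)
  then have "m = 2 * (j mod m)" by simp
  then have "even m" by (metis dvd_triv_left)
  then show False using m_odd by simp
qed

lemma sum_S:
  "(\<Sum>u\<in>(\<lambda>t. t ^ 2) ` (UNIV - {0::'a}). (H u :: complex)) =
   (\<Sum>u\<in>fourth_powers. H u) + (\<Sum>u\<in>fourth_powers. H (- u))"
proof -
  have "(\<Sum>u\<in>(\<lambda>t. t ^ 2) ` (UNIV - {0::'a}). H u) =
        (\<Sum>u\<in>fourth_powers. H u) + (\<Sum>u\<in>uminus ` fourth_powers. H u)"
    unfolding S_split by (rule sum.union_disjoint) (simp_all add: S_disj)
  also have "(\<Sum>u\<in>uminus ` fourth_powers. H u) = (\<Sum>u\<in>fourth_powers. H (- u))"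
    by (rule sum.reindex[unfolded comp_def]) simp
  finally show ?thesis .
qed

definition mu :: "('a \<Rightarrow> complex) \<Rightarrow> nat \<Rightarrow> complex" where
  "mu \<psi> k = (\<Sum>t\<in>fourth_powers. (\<psi> (1 + t) + \<psi> (1 - t)) * \<chi> t ^ (2 * k))"

lemma sigma_mu:
  assumes psi: "\<psi> \<in> mult_chars"
  shows "(\<Sum>t\<in>UNIV. \<psi> (1 - t) * \<psi> (1 + t) * char_pow \<chi> (int (4 * k)) t) = 2 * mu \<psi> k"
proof -
  define G where "G u = \<psi> (1 - u) * \<chi> u ^ (2 * k)" for u
  have "(\<Sum>t\<in>UNIV. \<psi> (1 - t) * \<psi> (1 + t) * char_pow \<chi> (int (4 * k)) t) =
        (\<Sum>t\<in>UNIV - {0}. \<psi> (1 - t) * \<psi> (1 + t) * char_pow \<chi> (int (4 * k)) t)"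
    by (subst sum.remove[of UNIV 0]) (simp_all add: char_pow_def)
  also have "\<dots> = (\<Sum>t\<in>UNIV - {0}. G (t ^ 2))"
  proof (rule sum.cong[OF refl])
    fix t :: 'a assume "t \<in> UNIV - {0}"
    then have t0: "t \<noteq> 0" by simp
    have "\<psi> (1 - t) * \<psi> (1 + t) = \<psi> (1 - t ^ 2)"
      using mc_mult[OF psi, of "1 - t" "1 + t"] by (simp add: power2_eq_square algebra_simps)
    have "char_pow \<chi> (int (4 * k)) t = \<chi> t ^ (4 * k)" unfolding char_pow_nat using t0 by simp
    moreover have "\<chi> t ^ (4 * k) = \<chi> (t ^ 2) ^ (2 * k)"
      using mc_pow[OF chi_mem] by (simp add: power_mult[symmetric] mult.commute mult.left_commute)
    ultimately have "char_pow \<chi> (int (4 * k)) t = \<chi> (t ^ 2) ^ (2 * k)" by simp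
    moreover note \<open>\<psi> (1 - t) * \<psi> (1 + t) = \<psi> (1 - t ^ 2)\<close>
    ultimately show "\<psi> (1 - t) * \<psi> (1 + t) * char_pow \<chi> (int (4 * k)) t = G (t ^ 2)"
      by (simp add: G_def)
  qed
  also have "\<dots> = 2 * ((\<Sum>u\<in>fourth_powers. G u) + (\<Sum>u\<in>fourth_powers. G (- u)))"
    by (simp add: sum_sq sum_S)
  also have "(\<Sum>u\<in>fourth_powers. G u) + (\<Sum>u\<in>fourth_powers. G (- u)) = mu \<psi> k"
  proof -
    have neg: "G (- u) = \<psi> (1 + u) * \<chi> u ^ (2 * k)" for u
    proof -
      have "\<chi> (- u) = - \<chi> u" using mc_mult[OF chi_mem, of "-1" u] chi_m1 by simp
      then show ?thesis by (simp add: G_def power_mult)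
    qed
    have "(\<Sum>u\<in>fourth_powers. G (- u)) = (\<Sum>u\<in>fourth_powers. \<psi> (1 + u) * \<chi> u ^ (2 * k))"
      by (rule sum.cong[OF refl]) (rule neg)
    moreover have "mu \<psi> k = (\<Sum>u\<in>fourth_powers. \<psi> (1 + u) * \<chi> u ^ (2 * k)) + (\<Sum>u\<in>fourth_powers. G u)"
      unfolding mu_def G_def by (simp add: sum.distrib[symmetric] distrib_right)
    ultimately show ?thesis by simp
  qed
  finally show ?thesis .
qed

end


lemma pointwise:
  fixes x y :: "'a::{finite,field}"
  assumes ph: "\<phi> \<in> mult_chars" and a0: "A0 \<in> mult_chars" and a1: "A1 \<in> mult_chars"
    and b1: "B1 \<in> mult_chars"
  shows "\<phi> (-1) * (A0 x * \<phi> x * inverse (\<phi> (1 - x))) *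
           (A1 y * \<phi> y * inverse (B1 (1 - y) * \<phi> (1 - y))) =
         (A0 x * A1 y * inverse (B1 (1 - y)) * (if x = 1 then 0 else 1)) *
           \<phi> (- (x * y) / ((1 - x) * (1 - y)))"
proof (cases "x = 0 \<or> x = 1 \<or> y = 0 \<or> y = 1")
  case True
  then show ?thesis using mc_0[OF ph] mc_0[OF a0] mc_0[OF a1] mc_0[OF b1] by auto
next
  case False
  then have x0: "x \<noteq> 0" and x1: "1 - x \<noteq> 0" and y0: "y \<noteq> 0" and y1: "1 - y \<noteq> 0" by auto
  have "\<phi> (- (x * y) / ((1 - x) * (1 - y))) = \<phi> (-1) * \<phi> x * \<phi> y / (\<phi> (1 - x) * \<phi> (1 - y))"
  proof -
    have "- (x * y) = (-1) * x * y" by simp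
    then show ?thesis by (simp only: mc_div[OF ph] mc_mult[OF ph])
  qed
  moreover have "\<phi> (1 - x) \<noteq> 0" "\<phi> (1 - y) \<noteq> 0" "B1 (1 - y) \<noteq> 0"
    using mc_nz[OF ph x1] mc_nz[OF ph y1] mc_nz[OF b1 y1] by auto
  ultimately show ?thesis using False by (simp add: field_simps)
qed

context gsetup begin

lemma m1_mc: "\<phi> \<in> mult_chars \<Longrightarrow> \<phi> (-1::'a) * \<phi> (-1) * \<phi> (-1) = \<phi> (-1)"
  using mc_m1 by (metis mult_1)

lemma xsol:
  fixes x y :: 'a
  assumes "x \<noteq> 0" "x \<noteq> 1" "y \<noteq> 0" "y \<noteq> 1"
  shows "(- (x * y) / ((1 - x) * (1 - y)) = 1) \<longleftrightarrow> x = (y - 1) / (2 * y - 1)"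
proof -
  have d: "(1 - x) * (1 - y) \<noteq> 0" using assms by simp
  have "(- (x * y) / ((1 - x) * (1 - y)) = 1) \<longleftrightarrow> - (x * y) = (1 - x) * (1 - y)"
    using d by (auto simp: field_simps)
  also have "\<dots> \<longleftrightarrow> x * (2 * y - 1) = y - 1" by (auto simp: algebra_simps)
  also have "\<dots> \<longleftrightarrow> x = (y - 1) / (2 * y - 1)"
  proof (cases "2 * y - 1 = 0")
    case True
    then have "y - 1 \<noteq> 0" using assms(4) by simp
    then show ?thesis using True assms(1) by simp
  next
    case False
    then show ?thesis by (simp add: eq_divide_eq)
  qed
  finally show ?thesis .
qed

end


context gsetup begin

lemma F_eval:
  fixes r k :: nat
  shows "greene_2F1 (char_pow \<chi> (- int r)) (char_pow \<chi> (4 * int k))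
                  (char_pow \<chi> (4 * int k + int r)) (-1) =
    (-1) ^ r / of_nat (card (UNIV::'a set)) *
    (\<Sum>t\<in>UNIV. char_pow \<chi> (int r) (1 - t) * char_pow \<chi> (int r) (1 + t) * char_pow \<chi> (int (4 * k)) t)"
proof -
  define A0 where "A0 = char_pow \<chi> (- int r)"
  define A1 where "A1 = char_pow \<chi> (int (4 * k))"
  define B1 where "B1 = char_pow \<chi> (4 * int k + int r)"
  define \<psi> where "\<psi> = char_pow \<chi> (int r)"
  have A1': "char_pow \<chi> (4 * int k) = A1" unfolding A1_def by simp
  have a0: "A0 \<in> mult_chars" and a1: "A1 \<in> mult_chars" and b1: "B1 \<in> mult_chars"
    and ps: "\<psi> \<in> mult_chars"
    unfolding A0_def A1_def B1_def \<psi>_def by (simp_all add: char_pow_mem[OF chi_mem])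
  have A0_eq: "A0 a = inverse (\<psi> a)" for a unfolding A0_def \<psi>_def by (rule char_pow_neg)
  have B1_eq: "B1 a = A1 a * \<psi> a" for a
    unfolding B1_def A1_def \<psi>_def using char_pow_add[OF chi_mem, of "4 * int k" "int r" a] by simp
  define q where "q = (of_nat (card (UNIV::'a set)) :: complex)"
  have cpos: "card (UNIV::'a set) > 0" by (simp add: card_gt_0_iff)
  have qn: "q - 1 = of_nat n" unfolding q_def n_def using cpos by (simp add: of_nat_diff)
  have q0: "q \<noteq> 0" unfolding q_def using cpos by simp
  have n0: "(of_nat n :: complex) \<noteq> 0" using n_pos by simp
  define Q where "Q x y = A0 x * A1 y * inverse (B1 (1 - y)) * (if x = 1 then 0 else 1)" for x y :: 'a
  define z where "z x y = - (x * y) / ((1 - x) * (1 - y))" for x y :: 'a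
  define xs where "xs y = (y - 1) / (2 * y - 1)" for y :: 'a

  have step1: "greene_binom (char_mult A0 \<phi>) \<phi> * greene_binom (char_mult A1 \<phi>) (char_mult B1 \<phi>) * \<phi> (-1)
     = B1 (-1) / q ^ 2 * (\<Sum>x\<in>UNIV. \<Sum>y\<in>UNIV. Q x y * \<phi> (z x y))"
    if ph: "\<phi> \<in> mult_chars" for \<phi>
  proof -
    define S1 where "S1 = (\<Sum>x\<in>UNIV. A0 x * \<phi> x * inverse (\<phi> (1 - x)))"
    define S2 where "S2 = (\<Sum>y\<in>UNIV. A1 y * \<phi> y * inverse (B1 (1 - y) * \<phi> (1 - y)))"
    have g1: "greene_binom (char_mult A0 \<phi>) \<phi> = \<phi> (-1) / q * S1"
      by (simp add: greene_binom_def jacobi_sum_def char_mult_def char_inv_def q_def S1_def)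
    have g2: "greene_binom (char_mult A1 \<phi>) (char_mult B1 \<phi>) = B1 (-1) * \<phi> (-1) / q * S2"
      by (simp add: greene_binom_def jacobi_sum_def char_mult_def char_inv_def q_def S2_def)
    have "greene_binom (char_mult A0 \<phi>) \<phi> * greene_binom (char_mult A1 \<phi>) (char_mult B1 \<phi>) * \<phi> (-1)
        = B1 (-1) / q ^ 2 * (\<phi> (-1) * \<phi> (-1)) * (\<phi> (-1) * (S1 * S2))"
      unfolding g1 g2 using q0 by (simp add: field_simps power2_eq_square)
    also have "\<phi> (-1) * \<phi> (-1) = 1" using mc_m1[OF ph] .
    also have "S1 * S2 = (\<Sum>x\<in>UNIV. \<Sum>y\<in>UNIV. (A0 x * \<phi> x * inverse (\<phi> (1 - x))) *
                   (A1 y * \<phi> y * inverse (B1 (1 - y) * \<phi> (1 - y))))"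
      unfolding S1_def S2_def by (rule sum_product)
    also have "\<phi> (-1) * \<dots> = (\<Sum>x\<in>UNIV. \<Sum>y\<in>UNIV. \<phi> (-1) * (A0 x * \<phi> x * inverse (\<phi> (1 - x))) *
                   (A1 y * \<phi> y * inverse (B1 (1 - y) * \<phi> (1 - y))))"
      by (simp add: sum_distrib_left mult.assoc)
    also have "\<dots> = (\<Sum>x\<in>UNIV. \<Sum>y\<in>UNIV. Q x y * \<phi> (z x y))"
      unfolding Q_def z_def by (simp only: pointwise[OF ph a0 a1 b1])
    finally show ?thesis by simp
  qed

  have step3: "Q x y * (\<Sum>\<phi>\<in>mult_chars. \<phi> (z x y)) = (if x = xs y then of_nat n * Q x y else 0)" for x y
  proof (cases "Q x y = 0")
    case True then show ?thesis unfolding True by simp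
  next
    case False
    then have x0: "x \<noteq> 0" and x1: "x \<noteq> 1" and y0: "y \<noteq> 0" and y1: "y \<noteq> 1"
      unfolding Q_def using mc_0[OF a0] mc_0[OF a1] mc_0[OF b1] by auto
    have z0: "z x y \<noteq> 0" unfolding z_def using x0 x1 y0 y1 by simp
    have "(z x y = 1) \<longleftrightarrow> x = xs y" unfolding z_def xs_def by (rule xsol[OF x0 x1 y0 y1])
    then show ?thesis using orth[OF z0] by auto
  qed

  have sumphi: "(\<Sum>\<phi>\<in>mult_chars. greene_binom (char_mult A0 \<phi>) \<phi> *
                   greene_binom (char_mult A1 \<phi>) (char_mult B1 \<phi>) * \<phi> (-1))
      = B1 (-1) / q ^ 2 * (of_nat n * (\<Sum>y\<in>UNIV. Q (xs y) y))"
  proof -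
    have "(\<Sum>\<phi>\<in>mult_chars. greene_binom (char_mult A0 \<phi>) \<phi> *
                   greene_binom (char_mult A1 \<phi>) (char_mult B1 \<phi>) * \<phi> (-1))
        = (\<Sum>\<phi>\<in>mult_chars. B1 (-1) / q ^ 2 * (\<Sum>x\<in>UNIV. \<Sum>y\<in>UNIV. Q x y * \<phi> (z x y)))"
      by (rule sum.cong[OF refl]) (rule step1)
    also have "\<dots> = B1 (-1) / q ^ 2 * (\<Sum>\<phi>\<in>mult_chars. \<Sum>x\<in>UNIV. \<Sum>y\<in>UNIV. Q x y * \<phi> (z x y))"
      by (simp add: sum_distrib_left)
    also have "(\<Sum>\<phi>\<in>(mult_chars :: ('a \<Rightarrow> complex) set). \<Sum>x\<in>UNIV. \<Sum>y\<in>UNIV. Q x y * \<phi> (z x y))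
        = (\<Sum>x\<in>UNIV. \<Sum>y\<in>UNIV. \<Sum>\<phi>\<in>mult_chars. Q x y * \<phi> (z x y))"
      by (simp add: sum.swap[of _ mult_chars] sum.swap[of _ "mult_chars :: ('a \<Rightarrow> complex) set" UNIV])
    also have "\<dots> = (\<Sum>x\<in>UNIV. \<Sum>y\<in>UNIV. Q x y * (\<Sum>\<phi>\<in>mult_chars. \<phi> (z x y)))"
      by (simp add: sum_distrib_left)
    also have "\<dots> = (\<Sum>x\<in>UNIV. \<Sum>y\<in>UNIV. (if x = xs y then of_nat n * Q x y else 0))"
      by (simp only: step3)
    also have "\<dots> = (\<Sum>y\<in>UNIV. \<Sum>x\<in>UNIV. (if x = xs y then of_nat n * Q x y else 0))"
      by (rule sum.swap)
    also have "\<dots> = (\<Sum>y\<in>UNIV. of_nat n * Q (xs y) y)"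
      by (simp add: sum.delta')
    also have "\<dots> = of_nat n * (\<Sum>y\<in>UNIV. Q (xs y) y)" by (simp add: sum_distrib_left)
    finally show ?thesis .
  qed

  have F1: "greene_2F1 A0 A1 B1 (-1) = B1 (-1) / q * (\<Sum>y\<in>UNIV. Q (xs y) y)"
  proof -
    have "greene_2F1 A0 A1 B1 (-1) = q / (q - 1) * (B1 (-1) / q ^ 2 * (of_nat n * (\<Sum>y\<in>UNIV. Q (xs y) y)))"
      unfolding greene_2F1_def q_def[symmetric] sumphi ..
    also have "\<dots> = B1 (-1) / q * (\<Sum>y\<in>UNIV. Q (xs y) y)"
      unfolding qn using q0 n0 by (simp add: field_simps power2_eq_square)
    finally show ?thesis .
  qed

  have B1m1: "B1 (-1) = (-1) ^ r"
  proof -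
    have "A1 (-1) = 1" unfolding A1_def char_pow_nat using chi_m1 by (simp add: power_mult)
    moreover have "\<psi> (-1) = (-1) ^ r" unfolding \<psi>_def char_pow_nat using chi_m1 by simp
    ultimately show ?thesis using B1_eq by simp
  qed

  have pt: "Q (xs (t / (1 + t))) (t / (1 + t)) = \<psi> (1 - t) * \<psi> (1 + t) * A1 t" if tm: "t \<noteq> -1" for t
  proof -
    have t1: "1 + t \<noteq> 0"
    proof
      assume "1 + t = 0"
      then have "t = - 1" by (simp only: add_eq_0_iff)
      then show False using tm by simp
    qed
    show ?thesis
    proof (cases "t = 0 \<or> t = 1")
      case True
      then show ?thesis
      proof
        assume "t = 0" then show ?thesis unfolding Q_def using mc_0[OF a1] by simp
      next
        assume t: "t = 1"
        have "t / (1 + t) = 1 / 2" using t two_nz by (simp add: one_add_one)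
        then have h2: "2 * (t / (1 + t)) - 1 = 0" using two_nz by simp
        have "xs (t / (1 + t)) = 0" unfolding xs_def h2 by (rule division_ring_divide_zero)
        then show ?thesis unfolding Q_def using mc_0[OF a0] mc_0[OF ps] t by simp
      qed
    next
      case False
      then have t0: "t \<noteq> 0" and tne1: "t \<noteq> 1" by auto
      have t2: "1 - t \<noteq> 0" using tne1 by simp
      have t3: "t - 1 \<noteq> 0" using tne1 by simp
      define y where "y = t / (1 + t)"
      have ym: "y - 1 = - 1 / (1 + t)" unfolding y_def using t1 by (simp add: field_simps)
      have y2: "2 * y - 1 = (t - 1) / (1 + t)" unfolding y_def using t1 by (simp add: field_simps)
      have xy: "xs y = 1 / (1 - t)"
      proof -
        have "xs y = (- 1 / (1 + t)) / ((t - 1) / (1 + t))" unfolding xs_def ym y2 ..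
        also have "\<dots> = - 1 / (t - 1)" using t1 t3 by (simp add: field_simps)
        also have "\<dots> = 1 / (1 - t)" using t2 t3 by (simp add: field_simps)
        finally show ?thesis .
      qed
      have xy1: "xs y \<noteq> 1"
      proof
        assume "xs y = 1"
        then have "1 / (1 - t) = 1" using xy by simp
        then have "1 - t = 1" using t2 by (simp add: field_simps)
        then show False using t0 by simp
      qed
      have y1: "1 - y = 1 / (1 + t)" unfolding y_def using t1 by (simp add: field_simps)
      have e1: "A0 (xs y) = \<psi> (1 - t)"
        unfolding xy A0_eq mc_div[OF ps] mc_1[OF ps] by simp
      have e2: "A1 y = A1 t / A1 (1 + t)" unfolding y_def by (rule mc_div[OF a1])
      have e3: "inverse (B1 (1 - y)) = A1 (1 + t) * \<psi> (1 + t)"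
        unfolding y1 B1_eq mc_div[OF a1] mc_div[OF ps] mc_1[OF a1] mc_1[OF ps] by simp
      have nz: "A1 (1 + t) \<noteq> 0" using mc_nz[OF a1 t1] .
      have "Q (xs y) y = \<psi> (1 - t) * (A1 t / A1 (1 + t)) * (A1 (1 + t) * \<psi> (1 + t))"
        unfolding Q_def e1 e2 e3 using xy1 by simp
      also have "\<dots> = \<psi> (1 - t) * \<psi> (1 + t) * A1 t" using nz by (simp add: field_simps)
      finally show ?thesis unfolding y_def .
    qed
  qed

  have step5: "(\<Sum>y\<in>UNIV. Q (xs y) y) = (\<Sum>t\<in>UNIV. \<psi> (1 - t) * \<psi> (1 + t) * A1 t)"
  proof -
    have "(\<Sum>y\<in>UNIV. Q (xs y) y) = (\<Sum>y\<in>UNIV - {1}. Q (xs y) y)"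
      by (subst sum.remove[of UNIV 1]) (simp_all add: Q_def mc_0[OF b1])
    also have "\<dots> = (\<Sum>t\<in>UNIV - {-1}. Q (xs (t / (1 + t))) (t / (1 + t)))"
    proof (rule sum.reindex_bij_witness[where i="\<lambda>t. t / (1 + t)" and j="\<lambda>y. y / (1 - y)"])
      fix a :: 'a assume "a \<in> UNIV - {1}"
      then have a1: "1 - a \<noteq> 0" by simp
      show ida: "a / (1 - a) / (1 + a / (1 - a)) = a" using a1 by (simp add: field_simps)
      show "a / (1 - a) \<in> UNIV - {-1}"
      proof
        show "a / (1 - a) \<notin> {-1}"
        proof
          assume "a / (1 - a) \<in> {-1}"
          then have "a = - (1 - a)" using a1 by (simp add: field_simps)
          then show False by simp
        qed
      qed simp
      show "Q (xs (a / (1 - a) / (1 + a / (1 - a)))) (a / (1 - a) / (1 + a / (1 - a))) = Q (xs a) a"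
        by (simp only: ida)
    next
      fix b :: 'a assume "b \<in> UNIV - {-1}"
      then have bm: "b \<noteq> -1" by simp
      have b1: "1 + b \<noteq> 0"
      proof
        assume "1 + b = 0"
        then have "b = - 1" by (simp only: add_eq_0_iff)
        then show False using bm by simp
      qed
      show "b / (1 + b) / (1 - b / (1 + b)) = b" using b1 by (simp add: field_simps)
      show "b / (1 + b) \<in> UNIV - {1}"
      proof
        show "b / (1 + b) \<notin> {1}"
        proof
          assume "b / (1 + b) \<in> {1}"
          then have "b = 1 + b" using b1 by (simp add: field_simps)
          then show False by simp
        qed
      qed simp
    qed
    also have "\<dots> = (\<Sum>t\<in>UNIV - {-1}. \<psi> (1 - t) * \<psi> (1 + t) * A1 t)"
      by (rule sum.cong[OF refl], rule pt) simp
    also have "\<dots> = (\<Sum>t\<in>UNIV. \<psi> (1 - t) * \<psi> (1 + t) * A1 t)"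
    proof -
      have "(\<Sum>t\<in>UNIV. \<psi> (1 - t) * \<psi> (1 + t) * A1 t) =
            \<psi> (1 - (-1)) * \<psi> (1 + (-1)) * A1 (-1) + (\<Sum>t\<in>UNIV - {-1}. \<psi> (1 - t) * \<psi> (1 + t) * A1 t)"
        by (rule sum.remove) simp_all
      then show ?thesis by (simp add: mc_0[OF ps])
    qed
    finally show ?thesis .
  qed

  show ?thesis
    unfolding A0_def[symmetric] A1' B1_def[symmetric] \<psi>_def[symmetric] A1_def[symmetric]
    using F1 B1m1 step5 q_def by simp
qed

end


lemma det_diag:
  "det (mat k k (\<lambda>(i,j). if i = j then f i else (0::complex))) = (\<Prod>i<k. f i)"
proof -
  let ?A = "mat k k (\<lambda>(i,j). if i = j then f i else (0::complex))"
  have "upper_triangular ?A" unfolding upper_triangular_def by auto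
  then have "det ?A = prod_list (diag_mat ?A)" by (rule det_upper_triangular[of _ k]) simp
  also have "\<dots> = (\<Prod>i = 0..<k. ?A $$ (i, i))" by (rule prod_list_diag_prod[of ?A, unfolded dim_row_mat])
  also have "\<dots> = (\<Prod>i<k. f i)" by (simp add: atLeast0LessThan)
  finally show ?thesis .
qed

context gsetup begin

lemma len_as:
  fixes as :: "'a list"
  assumes "distinct as" "set as = fourth_powers" shows "length as = m"
proof -
  have "length as = card (set as)" using distinct_card[OF assms(1)] by simp
  also have "\<dots> = card (fourth_powers :: 'a set)" using assms(2) by simp
  also have "\<dots> = m" by (rule card_D4)
  finally show ?thesis .
qed

lemma sum_as:
  fixes as :: "'a list"
  assumes "distinct as" "set as = fourth_powers"
  shows "(\<Sum>j<m. f (as ! j)) = (\<Sum>u\<in>fourth_powers. f u)"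
proof -
  have "bij_betw ((!) as) {..<m} fourth_powers"
    by (rule bij_betw_nth) (use assms len_as in auto)
  then show ?thesis by (rule sum.reindex_bij_betw)
qed

lemma prod_as:
  fixes as :: "'a list"
  assumes "distinct as" "set as = fourth_powers"
  shows "(\<Prod>j<m. f (as ! j)) = (\<Prod>u\<in>fourth_powers. f u)"
proof -
  have "bij_betw ((!) as) {..<m} fourth_powers"
    by (rule bij_betw_nth) (use assms len_as in auto)
  then show ?thesis by (rule prod.reindex_bij_betw)
qed

lemma as_D4:
  fixes as :: "'a list"
  assumes "set as = fourth_powers" "distinct as" "i < m"
  shows "as ! i \<in> fourth_powers"
  using assms len_as nth_mem by metis

lemma WV:
  fixes as :: "'a list"
  assumes dist: "distinct as" and sa: "set as = fourth_powers"
  shows "mat m m (\<lambda>(l,i). \<chi> (as ! i) ^ (2 * (m - l))) * mat m m (\<lambda>(i,l). \<chi> (as ! i) ^ (2 * l))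
         = of_nat m \<cdot>\<^sub>m 1\<^sub>m m"
proof (rule eq_matI)
  fix l l' assume l: "l < dim_row (of_nat m \<cdot>\<^sub>m (1\<^sub>m m :: complex mat))"
    and l': "l' < dim_col (of_nat m \<cdot>\<^sub>m (1\<^sub>m m :: complex mat))"
  then have l: "l < m" and l': "l' < m" by auto
  have "(mat m m (\<lambda>(l,i). \<chi> (as ! i) ^ (2 * (m - l))) * mat m m (\<lambda>(i,l). \<chi> (as ! i) ^ (2 * l))) $$ (l, l')
      = (\<Sum>i<m. \<chi> (as ! i) ^ (2 * (m - l)) * \<chi> (as ! i) ^ (2 * l'))"
    using l l' by (simp add: scalar_prod_def atLeast0LessThan)
  also have "\<dots> = (\<Sum>i<m. \<chi> (as ! i) ^ (2 * (m - l + l')))"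
    by (simp add: power_add[symmetric] algebra_simps)
  also have "\<dots> = (\<Sum>t\<in>fourth_powers. \<chi> t ^ (2 * (m - l + l')))"
    by (rule sum_as[OF dist sa])
  also have "\<dots> = (if l = l' then of_nat m else 0)"
  proof (cases "l = l'")
    case True
    then have mm: "m - l + l' = m" using l by simp
    have "(\<Sum>t\<in>fourth_powers. \<chi> t ^ (2 * (m - l + l'))) = (\<Sum>t\<in>(fourth_powers :: 'a set). (1::complex))"
      unfolding mm by (rule sum.cong[OF refl]) (rule chi_D4_2m)
    then show ?thesis using True card_D4 by simp
  next
    case False
    have "0 < m - l + l'" "m - l + l' < 2 * m" "m - l + l' \<noteq> m" using l l' False by auto
    then have "(\<Sum>t\<in>fourth_powers. \<chi> t ^ (2 * (m - l + l'))) = 0" by (rule orthD4)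
    then show ?thesis using False by simp
  qed
  also have "\<dots> = (of_nat m \<cdot>\<^sub>m 1\<^sub>m m) $$ (l, l')" using l l' by simp
  finally show "(mat m m (\<lambda>(l,i). \<chi> (as ! i) ^ (2 * (m - l))) * mat m m (\<lambda>(i,l). \<chi> (as ! i) ^ (2 * l))) $$ (l, l')
      = (of_nat m \<cdot>\<^sub>m 1\<^sub>m m) $$ (l, l')" .
qed auto

lemma detV:
  fixes as :: "'a list"
  assumes dist: "distinct as" and sa: "set as = fourth_powers"
  shows "det (mat m m (\<lambda>(i,l). \<chi> (as ! i) ^ (2 * l))) \<noteq> 0"
proof
  assume h: "det (mat m m (\<lambda>(i,l). \<chi> (as ! i) ^ (2 * l))) = 0"
  have "det (mat m m (\<lambda>(l,i). \<chi> (as ! i) ^ (2 * (m - l))) * mat m m (\<lambda>(i,l). \<chi> (as ! i) ^ (2 * l)))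
      = det (mat m m (\<lambda>(l,i). \<chi> (as ! i) ^ (2 * (m - l)))) * det (mat m m (\<lambda>(i,l). \<chi> (as ! i) ^ (2 * l)))"
    by (rule det_mult) auto
  also have "\<dots> = 0" using h by simp
  finally have d0: "det (of_nat m \<cdot>\<^sub>m (1\<^sub>m m :: complex mat)) = 0" by (simp only: WV[OF dist sa])
  have d1: "det (of_nat m \<cdot>\<^sub>m (1\<^sub>m m :: complex mat)) = of_nat m ^ m" by (simp add: det_smult)
  have "(of_nat m :: complex) \<noteq> 0" using m_pos by simp
  then have d2: "(of_nat m :: complex) ^ m \<noteq> 0" by (rule power_not_zero)
  show False using d0 d1 d2 by argo
qed

lemma BV:
  fixes r :: nat and as :: "'a list"
  assumes dist: "distinct as" and sa: "set as = fourth_powers"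
  defines "\<psi> \<equiv> char_pow \<chi> (int r)"
  shows "B_mat \<psi> as * mat m m (\<lambda>(i,l). \<chi> (as ! i) ^ (2 * l)) =
         mat m m (\<lambda>(i,j). if i = j then \<psi> (as ! i) else 0) * mat m m (\<lambda>(i,l). \<chi> (as ! i) ^ (2 * l))
         * mat m m (\<lambda>(i,j). if i = j then mu \<psi> i else 0)"
  (is "?L = ?D * ?V * ?M")
proof -
  have lm: "length as = m" using len_as[OF dist sa] .
  have ps: "\<psi> \<in> mult_chars" unfolding \<psi>_def by (rule char_pow_mem[OF chi_mem])
  have psiD: "\<psi> t = \<chi> t ^ r" if "t \<in> fourth_powers" for t
    using D4_nz[OF that] unfolding \<psi>_def char_pow_nat by simp
  show ?thesis
  proof (rule eq_matI)
    fix i l assume "i < dim_row (?D * ?V * ?M)" "l < dim_col (?D * ?V * ?M)"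
    then have i: "i < m" and l: "l < m" by auto
    have ai: "as ! i \<in> fourth_powers" using as_D4[OF sa dist i] .
    have ai0: "as ! i \<noteq> 0" using D4_nz[OF ai] .
    have "?L $$ (i, l) = (\<Sum>j<m. (\<psi> (as ! i + as ! j) + \<psi> (as ! i - as ! j)) * \<chi> (as ! j) ^ (2 * l))"
      using i l lm by (simp add: B_mat_def scalar_prod_def atLeast0LessThan)
    also have "\<dots> = (\<Sum>u\<in>fourth_powers. (\<psi> (as ! i + u) + \<psi> (as ! i - u)) * \<chi> u ^ (2 * l))"
      by (rule sum_as[OF dist sa])
    also have "\<dots> = (\<Sum>t\<in>fourth_powers. (\<psi> (as ! i + as ! i * t) + \<psi> (as ! i - as ! i * t)) * \<chi> (as ! i * t) ^ (2 * l))"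
      by (rule sum.reindex_bij_betw[OF D4_mult_bij[OF ai], symmetric])
    also have "\<dots> = (\<Sum>t\<in>fourth_powers. (\<psi> (as ! i) * \<chi> (as ! i) ^ (2 * l)) * ((\<psi> (1 + t) + \<psi> (1 - t)) * \<chi> t ^ (2 * l)))"
    proof (rule sum.cong[OF refl])
      fix t
      have e1: "\<psi> (as ! i + as ! i * t) = \<psi> (as ! i) * \<psi> (1 + t)"
      proof -
        have "as ! i + as ! i * t = as ! i * (1 + t)" by (simp add: algebra_simps)
        then show ?thesis by (simp only: mc_mult[OF ps])
      qed
      have e2: "\<psi> (as ! i - as ! i * t) = \<psi> (as ! i) * \<psi> (1 - t)"
      proof -
        have "as ! i - as ! i * t = as ! i * (1 - t)" by (simp add: algebra_simps)
        then show ?thesis by (simp only: mc_mult[OF ps])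
      qed
      have e3: "\<chi> (as ! i * t) ^ (2 * l) = \<chi> (as ! i) ^ (2 * l) * \<chi> t ^ (2 * l)"
        by (simp only: mc_mult[OF chi_mem] power_mult_distrib)
      show "(\<psi> (as ! i + as ! i * t) + \<psi> (as ! i - as ! i * t)) * \<chi> (as ! i * t) ^ (2 * l) =
          (\<psi> (as ! i) * \<chi> (as ! i) ^ (2 * l)) * ((\<psi> (1 + t) + \<psi> (1 - t)) * \<chi> t ^ (2 * l))"
        unfolding e1 e2 e3 by (simp add: algebra_simps)
    qed
    also have "\<dots> = \<psi> (as ! i) * \<chi> (as ! i) ^ (2 * l) * mu \<psi> l"
      unfolding mu_def by (simp add: sum_distrib_left)
    finally have L: "?L $$ (i, l) = \<psi> (as ! i) * \<chi> (as ! i) ^ (2 * l) * mu \<psi> l" .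
    have DV: "?D * ?V = mat m m (\<lambda>(i,l). \<psi> (as ! i) * \<chi> (as ! i) ^ (2 * l))"
    proof (rule eq_matI)
      fix i l assume "i < dim_row (mat m m (\<lambda>(i,l). \<psi> (as ! i) * \<chi> (as ! i) ^ (2 * l)))"
        "l < dim_col (mat m m (\<lambda>(i,l). \<psi> (as ! i) * \<chi> (as ! i) ^ (2 * l)))"
      then have i: "i < m" and l: "l < m" by auto
      have "(?D * ?V) $$ (i, l) = (\<Sum>k\<in>{..<m}. (if i = k then \<psi> (as ! i) else 0) * \<chi> (as ! k) ^ (2 * l))"
        using i l by (simp add: scalar_prod_def atLeast0LessThan)
      also have "\<dots> = (\<Sum>k\<in>{..<m}. if k = i then \<psi> (as ! i) * \<chi> (as ! k) ^ (2 * l) else 0)"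
        by (rule sum.cong) auto
      also have "\<dots> = \<psi> (as ! i) * \<chi> (as ! i) ^ (2 * l)" using i by (simp add: sum.delta)
      finally show "(?D * ?V) $$ (i, l) = mat m m (\<lambda>(i,l). \<psi> (as ! i) * \<chi> (as ! i) ^ (2 * l)) $$ (i, l)"
        using i l by simp
    qed auto
    have "(?D * ?V * ?M) $$ (i, l) = (\<Sum>k\<in>{..<m}. (\<psi> (as ! i) * \<chi> (as ! i) ^ (2 * k)) * (if k = l then mu \<psi> k else 0))"
      unfolding DV using i l by (simp add: scalar_prod_def atLeast0LessThan)
    also have "\<dots> = (\<Sum>k\<in>{..<m}. if k = l then (\<psi> (as ! i) * \<chi> (as ! i) ^ (2 * k)) * mu \<psi> k else 0)"
      by (rule sum.cong) auto
    also have "\<dots> = \<psi> (as ! i) * \<chi> (as ! i) ^ (2 * l) * mu \<psi> l" using l by (simp add: sum.delta)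
    finally show "?L $$ (i, l) = (?D * ?V * ?M) $$ (i, l)" using L by simp
  qed (use len_as[OF dist sa] in \<open>auto simp: B_mat_def\<close>)
qed

lemma detB:
  fixes as :: "'a list" and r :: nat
  assumes dist: "distinct as" and sa: "set as = fourth_powers"
  shows "det (B_mat (char_pow \<chi> (int r)) as) = (\<Prod>l<m. mu (char_pow \<chi> (int r)) l)"
proof -
  define \<psi> where "\<psi> = char_pow \<chi> (int r)"
  let ?V = "mat m m (\<lambda>(i,l). \<chi> (as ! i) ^ (2 * l))"
  let ?D = "mat m m (\<lambda>(i,j). if i = j then \<psi> (as ! i) else 0)"
  let ?M = "mat m m (\<lambda>(i,j). if i = j then mu \<psi> i else 0)"
  have lm: "length as = m" using len_as[OF dist sa] .
  have Bc: "B_mat \<psi> as \<in> carrier_mat m m" using lm by (simp add: B_mat_def)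
  have "det (B_mat \<psi> as) * det ?V = det (B_mat \<psi> as * ?V)"
    by (rule det_mult[symmetric, OF Bc]) simp
  also have "\<dots> = det (?D * ?V * ?M)" unfolding \<psi>_def by (subst BV[OF dist sa]) simp
  also have "\<dots> = det (?D * ?V) * det ?M" by (rule det_mult[of _ m]) auto
  also have "det (?D * ?V) = det ?D * det ?V" by (rule det_mult[of _ m]) auto
  also have "det ?D = (\<Prod>i<m. \<psi> (as ! i))" by (rule det_diag)
  also have "\<dots> = (\<Prod>t\<in>fourth_powers. \<psi> t)" by (rule prod_as[OF dist sa])
  also have "\<dots> = (\<Prod>t\<in>fourth_powers. \<chi> t ^ r)"
    by (rule prod.cong[OF refl]) (simp add: \<psi>_def char_pow_nat D4_nz)
  also have "\<dots> = 1" by (rule prod_D4_one)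
  also have "det ?M = (\<Prod>l<m. mu \<psi> l)" by (rule det_diag)
  finally have "det (B_mat \<psi> as) * det ?V = det ?V * (\<Prod>l<m. mu \<psi> l)" by simp
  then show ?thesis using detV[OF dist sa] unfolding \<psi>_def by simp
qed

end


theorem theorem1p2:
  fixes \<chi> :: "'a::{finite,field} \<Rightarrow> complex" and r :: nat and as :: "'a list"
  assumes "(card (UNIV::'a set)) mod 8 = 5"
    and "is_char_generator \<chi>"
    and "1 \<le> r" and "r \<le> (card (UNIV::'a set)) - 2"
    and "distinct as" and "set as = fourth_powers"
  shows "det (B_mat (char_pow \<chi> (int r)) as) =
    (-1) ^ r * (of_nat (card (UNIV::'a set)) / 2) ^ (((card (UNIV::'a set)) - 1) div 4) *
    (\<Prod>k\<in>{0..((card (UNIV::'a set)) - 5) div 4}.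
       greene_2F1 (char_pow \<chi> (- int r)) (char_pow \<chi> (4 * int k))
                  (char_pow \<chi> (4 * int k + int r)) (-1))"
proof -
  obtain g :: 'a where g0: "g \<noteq> 0" and gen: "\<forall>x. x \<noteq> 0 \<longrightarrow> (\<exists>i::nat. x = g ^ i)"
    using gen_exists by blast
  define c where "c = card (UNIV::'a set)"
  define n where "n = c - 1"
  define m where "m = n div 4"
  have c8: "c mod 8 = 5" using assms(1) c_def by simp
  define j where "j = c div 8"
  have cj: "c = 8 * j + 5" unfolding j_def using c8 div_mult_mod_eq[of c 8] by linarith
  have nj: "n = 4 * (2 * j + 1)" unfolding n_def cj by simp
  have mj: "m = 2 * j + 1" unfolding m_def nj by simp
  have nm: "n = 4 * m" using nj mj by simp
  have mo: "odd m" using mj by simp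
  have m5: "(c - 5) div 4 = m - 1" unfolding mj cj by simp
  have m1: "(c - 1) div 4 = m" unfolding m_def n_def by simp
  interpret gsetup g \<chi> n m
    by unfold_locales (use g0 gen assms(2) nm mo in \<open>auto simp: n_def c_def\<close>)
  define q where "q = (of_nat c :: complex)"
  have q0: "q \<noteq> 0" unfolding q_def c_def by (simp add: card_gt_0_iff)
  define F where "F k = greene_2F1 (char_pow \<chi> (- int r)) (char_pow \<chi> (4 * int k))
                  (char_pow \<chi> (4 * int k + int r)) (-1)" for k :: nat
  define \<psi> where "\<psi> = char_pow \<chi> (int r)"
  have ps: "\<psi> \<in> mult_chars" unfolding \<psi>_def by (rule char_pow_mem[OF chi_mem])
  have sgn: "((-1::complex) ^ r) * ((-1) ^ r) = 1"
    by (simp add: power_add[symmetric])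
  have each: "mu \<psi> k = (-1) ^ r * (q / 2) * F k" for k
  proof -
    have s: "(\<Sum>t\<in>UNIV. \<psi> (1 - t) * \<psi> (1 + t) * char_pow \<chi> (int (4 * k)) t) = 2 * mu \<psi> k"
      by (rule sigma_mu[OF ps])
    have "F k = (-1) ^ r / q *
      (\<Sum>t\<in>UNIV. \<psi> (1 - t) * \<psi> (1 + t) * char_pow \<chi> (int (4 * k)) t)"
      unfolding F_def \<psi>_def q_def c_def by (rule F_eval)
    then have "F k = (-1) ^ r / q * (2 * mu \<psi> k)" unfolding s .
    then have "(-1) ^ r * (q / 2) * F k = (-1) ^ r * (q / 2) * ((-1) ^ r / q * (2 * mu \<psi> k))"
      by simp
    also have "\<dots> = ((-1) ^ r * (-1) ^ r) * mu \<psi> k"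
      using q0 by (simp add: field_simps)
    also have "\<dots> = mu \<psi> k" unfolding sgn by simp
    finally show ?thesis by simp
  qed
  have "det (B_mat (char_pow \<chi> (int r)) as) = (\<Prod>l<m. mu \<psi> l)"
    unfolding \<psi>_def by (rule detB[OF assms(5,6)])
  also have "\<dots> = (\<Prod>l<m. ((-1) ^ r * (q / 2)) * F l)" by (simp add: each)
  also have "\<dots> = ((-1) ^ r * (q / 2)) ^ m * (\<Prod>l<m. F l)"
    by (simp only: prod.distrib prod_constant card_lessThan power_mult_distrib)
  also have "((-1::complex) ^ r * (q / 2)) ^ m = (-1) ^ r * (q / 2) ^ m"
  proof -
    have "((-1::complex) ^ r) ^ m = ((-1) ^ m) ^ r" by (simp add: power_mult[symmetric] mult.commute)
    also have "(-1::complex) ^ m = -1" using mo by simp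
    finally have "((-1::complex) ^ r) ^ m = (-1) ^ r" .
    then show ?thesis by (simp only: power_mult_distrib)
  qed
  also have "(\<Prod>l<m. F l) = (\<Prod>k\<in>{0..(c - 5) div 4}. F k)"
  proof -
    have "{0..(c - 5) div 4} = {..<m}" unfolding m5 using m_pos by auto
    then show ?thesis by simp
  qed
  finally show ?thesis unfolding F_def q_def c_def[symmetric] m1 .
qed


end
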